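(* Let $\Theta\subseteq\mathbb{R}^p$ be convex and let $f=\frac1T\sum_{t=1}^Tf^t$ where each $f^t:\mathbb{R}^p\to\mathbb{R}$ is continuous, $f$ is convex with a minimizer $\theta^\star$ on $\Theta$, $f^\star\triangleq\min_{\theta\in\Theta}f(\theta)$, and $\delta\triangleq1/T$. Consider the incremental scheme (MISO): given $\theta_0\in\Theta$, choose surrogates $g_0^t$ of $f^t$ near $\theta_0$ for all $t$; for $n\ge1$, pick $\hat t_n\in\{1,\dots,T\}$ uniformly at random (independently), choose a surrogate $g_n^{\hat t_n}$ of $f^{\hat t_n}$ near $\theta_{n-1}$, set $g_n^t\triangleq g_{n-1}^t$ for $t\ne\hat t_n$, and set $\theta_n\in\operatorname{arg\,min}_{\theta\in\Theta}\frac1T\sum_{t=1}^Tg_n^t(\theta)$. Assume every surrogate is a majorant function, with $g_0^t\in\mathcal{S}_{L,\rho}(f^t,\theta_0)$ and $g_n^{\hat t_n}\in\mathcal{S}_{L,\rho}(f^{\hat t_n},\theta_{n-1})$, where $\rho\ge L$. Then $$\mathbb{E}[f(\theta_n)-f^\star]\le\frac{L\|\theta^\star-\theta_0\|_2^2}{2\delta n}\quad\text{for all }n\ge1.$$ If moreover $f$ is $\mu$-strongly convex, then for all $n\ge1$, $$\mathbb{E}[\|\theta^\star-\theta_n\|_2^2]\le\Big((1-\delta)+\delta\frac{L}{\rho+\mu}\Big)^n\|\theta^\star-\theta_0\|_2^2,\qquad\mathbb{E}[f(\theta_n)-f^\star]\le\Big((1-\delta)+\delta\frac{L}{\rho+\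mu}\Big)^{n-1}\frac{L\|\theta^\star-\theta_0\|_2^2}{2}.$$
   Context: First-order surrogates: $g:\mathbb{R}^p\to\mathbb{R}$ belongs to $\mathcal{S}_L(\phi,\kappa)$ if (a) $g(\theta')\ge\phi(\theta')$ for all $\theta'\in\operatorname{arg\,min}_{\theta\in\Theta}g(\theta)$, and (b) $h\triangleq g-\phi$ is differentiable with $L$-Lipschitz gradient, $h(\kappa)=0$, $\nabla h(\kappa)=0$; $\mathcal{S}_{L,\rho}(\phi,\kappa)$ is the subset of $\rho$-strongly convex elements. A majorant function satisfies $g\ge\phi$ everywhere. The minimizers are assumed to exist. *)

theory Defs
  imports "HOL-Analysis.Analysis" "HOL-Probability.Probability"
begin

definition strongly_convex_on :: "'a::real_inner set \<Rightarrow> real \<Rightarrow> ('a \<Rightarrow> real) \<Rightarrow> bool" where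
  "strongly_convex_on S mu g \<longleftrightarrow> convex_on S (\<lambda>x. g x - mu / 2 * (norm x)\<^sup>2)"

definition first_order_surrogate ::
  "'a::euclidean_space set \<Rightarrow> real \<Rightarrow> ('a \<Rightarrow> real) \<Rightarrow> 'a \<Rightarrow> ('a \<Rightarrow> real) \<Rightarrow> bool" where
  "first_order_surrogate Theta L phi kappa g \<longleftrightarrow>
     (\<forall>\<theta>'. (\<theta>' \<in> Theta \<and> (\<forall>\<theta>\<in>Theta. g \<theta>' \<le> g \<theta>)) \<longrightarrow> g \<theta>' \<ge> phi \<theta>') \<and>
     (\<exists>gh. (\<forall>x. ((\<lambda>y. g y - phi y) has_derivative (\<lambda>v. gh x \<bullet> v)) (at x)) \<and>
           L-lipschitz_on UNIV gh \<and>
           g kappa - phi kappa = 0 \<and> gh kappa = 0)"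

definition sc_first_order_surrogate ::
  "'a::euclidean_space set \<Rightarrow> real \<Rightarrow> real \<Rightarrow> ('a \<Rightarrow> real) \<Rightarrow> 'a \<Rightarrow> ('a \<Rightarrow> real) \<Rightarrow> bool" where
  "sc_first_order_surrogate Theta L rho phi kappa g \<longleftrightarrow>
     first_order_surrogate Theta L phi kappa g \<and> strongly_convex_on UNIV rho g"

definition majorant :: "('a \<Rightarrow> real) \<Rightarrow> ('a \<Rightarrow> real) \<Rightarrow> bool" where
  "majorant phi g \<longleftrightarrow> (\<forall>x. g x \<ge> phi x)"

(* set of histories (t_1,...,t_n) of sampled indices in {1..T}; uniform = i.i.d. uniform picks *)
definition histories :: "nat \<Rightarrow> nat \<Rightarrow> nat list set" where
  "histories T n = {hs. length hs = n \<and> set hs \<subseteq> {1..T}}"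

end

theory Submission
  imports Defs
begin
lemma norm_comb_identity:
  fixes a b :: "'a::real_inner"
  shows "(1-t) * (norm a)\<^sup>2 + t * (norm b)\<^sup>2 - (norm ((1-t) *\<^sub>R a + t *\<^sub>R b))\<^sup>2
         = t * (1-t) * (norm (a - b))\<^sup>2"
  unfolding power2_norm_eq_inner by (simp add: inner_add inner_diff inner_commute algebra_simps)

lemma aux_lin:
  fixes Gx Ga Gb Nx Na Nb D r t :: real
  assumes "Gx - r/2*Nx \<le> (1-t)*(Ga - r/2*Na) + t*(Gb - r/2*Nb)"
    and "(1-t)*Na + t*Nb - Nx = t*(1-t)*D"
  shows "Gx \<le> (1-t)*Ga + t*Gb - r/2*t*(1-t)*D"
proof -
  have e: "Nx - (1-t)*Na - t*Nb = - (t*(1-t)*D)" using assms(2) by linarith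
  have e2: "r/2*(Nx - (1-t)*Na - t*Nb) = -(r/2*t*(1-t)*D)" by (simp add: e)
  have e3: "Gx - ((1-t)*Ga + t*Gb + r/2*(Nx - (1-t)*Na - t*Nb)) = (Gx - r/2*Nx) - ((1-t)*(Ga - r/2*Na) + t*(Gb - r/2*Nb))"
    by (simp add: field_simps)
  have "Gx \<le> (1-t)*Ga + t*Gb + r/2*(Nx - (1-t)*Na - t*Nb)" using assms(1) e3 by linarith
  with e2 show ?thesis by linarith
qed

lemma aux_comb: "(1 - d) * c + d * c = (c::real)"
  by (simp add: algebra_simps)

lemma aux_beta: "(1 - d) + d * q - q = (1 - d) * (1 - (q::real))"
  by (simp add: algebra_simps)

lemma aux_beta2: "(1-d)*a + d*(q*a) = ((1-d) + d*q)*(a::real)"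
  by (simp add: algebra_simps)

lemma sc_ineq:
  fixes G :: "'a::real_inner \<Rightarrow> real"
  assumes "strongly_convex_on UNIV rho G" "0 \<le> t" "t \<le> 1"
  shows "G ((1-t) *\<^sub>R a + t *\<^sub>R b) \<le> (1-t) * G a + t * G b - rho/2 * t * (1-t) * (norm (a-b))\<^sup>2"
proof -
  have conv: "G ((1-t) *\<^sub>R a + t *\<^sub>R b) - rho/2 * (norm ((1-t) *\<^sub>R a + t *\<^sub>R b))\<^sup>2
     \<le> (1-t) * (G a - rho/2 * (norm a)\<^sup>2) + t * (G b - rho/2 * (norm b)\<^sup>2)"
    using assms unfolding strongly_convex_on_def
    by (intro convex_onD) auto
  show ?thesis by (rule aux_lin[OF conv norm_comb_identity[of t a b]])
qed

lemma sc_argmin_core: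
  fixes G :: "'a::real_inner \<Rightarrow> real"
  assumes sc: "\<And>t. 0 \<le> t \<Longrightarrow> t \<le> 1 \<Longrightarrow> G ((1-t) *\<^sub>R a + t *\<^sub>R b) \<le> (1-t) * G a + t * G b - rho/2 * t * (1-t) * D"
    and min: "\<And>t. 0 \<le> t \<Longrightarrow> t \<le> 1 \<Longrightarrow> G a \<le> G ((1-t) *\<^sub>R a + t *\<^sub>R b)"
  shows "G a + rho/2 * D \<le> G b"
proof (rule ccontr)
  assume c: "\<not> ?thesis"
  define K where "K = rho/2 * D"
  define x where "x = G b - G a"
  have x0: "x \<ge> 0" using sc[of 1] min[of 1] by (simp add: x_def)
  have xK: "x < K" using c by (simp add: x_def K_def)
  define t where "t = (K - x) / (2*K)"
  have K0: "K > 0" using x0 xK by linarith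
  have t0: "0 < t" "t \<le> 1" using K0 x0 xK by (auto simp: t_def field_simps)
  have "G a \<le> (1-t) * G a + t * G b - K * t * (1-t)"
    using sc[of t] min[of t] t0 by (simp add: K_def algebra_simps)
  hence "t * K * (1-t) \<le> t * x" by (simp add: x_def algebra_simps)
  hence "K * (1-t) \<le> x" using t0 by (simp add: mult.assoc)
  moreover have "K * (1-t) = (K + x)/2" using K0 by (simp add: t_def field_simps)
  ultimately have "(K + x)/2 \<le> x" by simp
  thus False using xK by simp
qed

lemma quad_upper:
  fixes h :: "'a::euclidean_space \<Rightarrow> real"
  assumes der: "\<And>x. (h has_derivative (\<lambda>v. gh x \<bullet> v)) (at x)"
    and lip: "L-lipschitz_on UNIV gh" and hk: "h k = 0" and gk: "gh k = 0"
  shows "h y \<le> L/2 * (norm (y - k))\<^sup>2"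
proof -
  define v where "v = y - k"
  define phi where "phi s = h (k + s *\<^sub>R v) - L/2 * s^2 * (norm v)\<^sup>2" for s :: real
  have L0: "L \<ge> 0" using lip by (simp add: lipschitz_on_def)
  have "phi 1 \<le> phi 0"
  proof (rule DERIV_nonpos_imp_nonincreasing[where f=phi and a=0 and b=1])
    fix s :: real assume s: "0 \<le> s" "s \<le> 1"
    have d1: "((\<lambda>s. h (k + s *\<^sub>R v)) has_derivative (\<lambda>u. gh (k + s *\<^sub>R v) \<bullet> (u *\<^sub>R v))) (at s)"
      by (rule has_derivative_compose[OF _ der, where f="\<lambda>s. k + s *\<^sub>R v", simplified])
         (auto intro!: derivative_eq_intros)
    have d2: "((\<lambda>s. h (k + s *\<^sub>R v)) has_real_derivative (gh (k + s *\<^sub>R v) \<bullet> v)) (at s)"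
    proof -
      have "(\<lambda>u. gh (k + s *\<^sub>R v) \<bullet> (u *\<^sub>R v)) = (*) (gh (k + s *\<^sub>R v) \<bullet> v)"
        by (auto simp: inner_scaleR_right)
      thus ?thesis using d1 by (simp add: has_field_derivative_def)
    qed
    have dphi: "(phi has_real_derivative (gh (k + s *\<^sub>R v) \<bullet> v - L * s * (norm v)\<^sup>2)) (at s)"
      unfolding phi_def by (rule derivative_eq_intros d2 | simp)+
    have lipb: "norm (gh (k + s *\<^sub>R v) - gh k) \<le> L * norm (s *\<^sub>R v)"
      using lip unfolding lipschitz_on_def by (metis UNIV_I dist_norm add_diff_cancel_left')
    have "gh (k + s *\<^sub>R v) \<bullet> v = (gh (k + s *\<^sub>R v) - gh k) \<bullet> v" using gk by simp
    also have "\<dots> \<le> norm (gh (k + s *\<^sub>R v) - gh k) * norm v" by (rule norm_cauchy_schwarz)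
    also have "\<dots> \<le> L * norm (s *\<^sub>R v) * norm v"
      using lipb by (simp add: mult_right_mono)
    also have "\<dots> = L * s * (norm v)\<^sup>2" using s by (simp add: power2_eq_square)
    finally show "\<exists>y. (phi has_real_derivative y) (at s) \<and> y \<le> 0" using dphi by auto
  qed simp
  thus ?thesis by (simp add: phi_def hk v_def)
qed
lemma hist_fin: "finite (histories T n)"
  using finite_lists_length_eq[of "{1..T}" n] unfolding histories_def by (simp add: conj_commute)

lemma hist_card: "card (histories T n) = T^n"
  using card_lists_length_eq[of "{1..T}" n] unfolding histories_def by (simp add: conj_commute)

lemma hist_ne: "T \<ge> 1 \<Longrightarrow> histories T n \<noteq> {}"
  unfolding histories_def by (rule ccontr) (auto dest!: spec[of _ "replicate n 1"])

lemma hist_0: "histories T 0 = {[]}"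
  unfolding histories_def by auto

lemma hist_Suc: "histories T (Suc n) = (\<lambda>(hs,s). hs@[s]) ` (histories T n \<times> {1..T})"
proof (rule set_eqI, rule iffI)
  fix xs assume "xs \<in> histories T (Suc n)"
  then have l: "length xs = Suc n" "set xs \<subseteq> {1..T}" by (auto simp: histories_def)
  then obtain ys y where "xs = ys @ [y]" by (metis length_Suc_conv_rev)
  with l show "xs \<in> (\<lambda>(hs,s). hs@[s]) ` (histories T n \<times> {1..T})"
    by (auto simp: histories_def image_iff)
qed (auto simp: histories_def)

lemma hist_sum: "(\<Sum>hs\<in>histories T (Suc n). X hs) = (\<Sum>hs\<in>histories T n. \<Sum>s\<in>{1..T}. X (hs@[s]))"
proof -
  have inj: "inj_on (\<lambda>(hs,s). hs@[s]) (histories T n \<times> {1..T})"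
    by (auto simp: inj_on_def)
  have "(\<Sum>hs\<in>histories T (Suc n). X hs) = (\<Sum>p\<in>histories T n \<times> {1..T}. X ((\<lambda>(hs,s). hs@[s]) p))"
    unfolding hist_Suc by (rule sum.reindex[OF inj, unfolded comp_def])
  also have "\<dots> = (\<Sum>hs\<in>histories T n. \<Sum>s\<in>{1..T}. X (hs@[s]))"
    by (simp add: sum.cartesian_product split_def)
  finally show ?thesis .
qed

lemma sur_facts:
  assumes "sc_first_order_surrogate Theta L rho phi k G"
  shows "G k = phi k" "\<And>y. G y \<le> phi y + L/2 * (norm (y - k))\<^sup>2" "strongly_convex_on UNIV rho G" "0 \<le> L"
proof -
  from assms obtain gh where der: "\<And>x. ((\<lambda>y. G y - phi y) has_derivative (\<lambda>v. gh x \<bullet> v)) (at x)"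
    and lip: "L-lipschitz_on UNIV gh" and hk: "G k - phi k = 0" and gk: "gh k = 0"
    and sc: "strongly_convex_on UNIV rho G"
    unfolding sc_first_order_surrogate_def first_order_surrogate_def by blast
  show "G k = phi k" using hk by simp
  show "strongly_convex_on UNIV rho G" by (rule sc)
  show "0 \<le> L" using lip by (simp add: lipschitz_on_def)
  fix y
  have "G y - phi y \<le> L/2 * (norm (y - k))\<^sup>2"
    by (rule quad_upper[where h="\<lambda>y. G y - phi y", OF der lip hk gk])
  thus "G y \<le> phi y + L/2 * (norm (y - k))\<^sup>2" by simp
qed

theorem proposition6p2:
  fixes Theta :: "'a::euclidean_space set"
    and T :: nat
    and f :: "nat \<Rightarrow> 'a \<Rightarrow> real"
    and F :: "'a \<Rightarrow> real"
    and theta_star :: 'a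
    and L rho :: real
    and theta :: "nat list \<Rightarrow> 'a"
    and g :: "nat list \<Rightarrow> nat \<Rightarrow> 'a \<Rightarrow> real"
  assumes Theta_convex: "convex Theta"
    and T_pos: "T \<ge> 1"
    and f_cont: "\<And>t. t \<in> {1..T} \<Longrightarrow> continuous_on UNIV (f t)"
    and F_def: "\<And>x. F x = (1 / real T) * (\<Sum>t=1..T. f t x)"
    and F_convex: "convex_on UNIV F"
    and star_in: "theta_star \<in> Theta"
    and star_min: "\<And>x. x \<in> Theta \<Longrightarrow> F theta_star \<le> F x"
    and rho_ge: "rho \<ge> L"
    and init_in: "theta [] \<in> Theta"
    and g0_sur: "\<And>t. t \<in> {1..T} \<Longrightarrow>
                   sc_first_order_surrogate Theta L rho (f t) (theta []) (g [] t)
                   \<and> majorant (f t) (g [] t)"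
    and gn_sur: "\<And>hs s. set hs \<subseteq> {1..T} \<Longrightarrow> s \<in> {1..T} \<Longrightarrow>
                   sc_first_order_surrogate Theta L rho (f s) (theta hs) (g (hs @ [s]) s)
                   \<and> majorant (f s) (g (hs @ [s]) s)"
    and gn_keep: "\<And>hs s t. set hs \<subseteq> {1..T} \<Longrightarrow> s \<in> {1..T} \<Longrightarrow> t \<in> {1..T} \<Longrightarrow>
                   t \<noteq> s \<Longrightarrow> g (hs @ [s]) t = g hs t"
    and theta_in: "\<And>hs. set hs \<subseteq> {1..T} \<Longrightarrow> theta hs \<in> Theta"
    and theta_argmin: "\<And>hs x. set hs \<subseteq> {1..T} \<Longrightarrow> hs \<noteq> [] \<Longrightarrow> x \<in> Theta \<Longrightarrow>
                   (1 / real T) * (\<Sum>t=1..T. g hs t (theta hs))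
                   \<le> (1 / real T) * (\<Sum>t=1..T. g hs t x)"
  shows "(\<forall>n\<ge>1.
            measure_pmf.expectation (pmf_of_set (histories T n))
              (\<lambda>hs. F (theta hs) - F theta_star)
            \<le> L * (norm (theta_star - theta []))\<^sup>2 / (2 * (1 / real T) * real n))
       \<and> (\<forall>mu>0. strongly_convex_on UNIV mu F \<longrightarrow>
            (\<forall>n\<ge>1.
               measure_pmf.expectation (pmf_of_set (histories T n))
                 (\<lambda>hs. (norm (theta_star - theta hs))\<^sup>2)
               \<le> ((1 - 1 / real T) + (1 / real T) * (L / (rho + mu))) ^ n
                   * (norm (theta_star - theta []))\<^sup>2
             \<and> measure_pmf.expectation (pmf_of_set (histories T n))
                 (\<lambda>hs. F (theta hs) - F theta_star)
               \<le> ((1 - 1 / real T) + (1 / real T) * (L / (rho + mu))) ^ (n - 1)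
                   * (L * (norm (theta_star - theta []))\<^sup>2 / 2)))"
proof -
  define dl where "dl = 1 / real T"
  have Tpos: "real T > 0" using T_pos by simp
  have dl_pos: "dl > 0" and dl_le: "dl \<le> 1" using T_pos by (auto simp: dl_def field_simps)
  define gb where "gb hs x = (1 / real T) * (\<Sum>t=1..T. g hs t x)" for hs x
  define fs where "fs = F theta_star"
  define A where "A hs = gb hs theta_star - fs" for hs
  define B where "B hs = gb hs (theta hs) - fs" for hs
  define e where "e hs = F (theta hs) - fs" for hs
  define dd where "dd hs = (norm (theta_star - theta hs))\<^sup>2" for hs
  have one: "(1::nat) \<in> {1..T}" using T_pos by simp
  have L0: "0 \<le> L" using sur_facts(4)[OF conjunct1[OF g0_sur[OF one]]] .
  have rho0: "0 \<le> rho" using L0 rho_ge by linarith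
  have dd0: "\<And>hs. 0 \<le> dd hs" by (simp add: dd_def)

  have gprop: "majorant (f t) (g hs t) \<and> strongly_convex_on UNIV rho (g hs t)"
    if "set hs \<subseteq> {1..T}" "t \<in> {1..T}" for hs t
    using that
  proof (induction hs rule: rev_induct)
    case Nil thus ?case using g0_sur[of t] sur_facts(3) by blast
  next
    case (snoc s hs)
    then have hs: "set hs \<subseteq> {1..T}" and s: "s \<in> {1..T}" by auto
    show ?case
    proof (cases "t = s")
      case True thus ?thesis using gn_sur[OF hs s] sur_facts(3) by blast
    next
      case False thus ?thesis
        using snoc.IH[OF hs snoc.prems(2)] gn_keep[OF hs s snoc.prems(2) False] by simp
    qed
  qed

  have F_le_gb: "F x \<le> gb hs x" if h: "set hs \<subseteq> {1..T}" for hs x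
  proof -
    have "(\<Sum>t=1..T. f t x) \<le> (\<Sum>t=1..T. g hs t x)"
      by (rule sum_mono) (use gprop[OF h] in \<open>auto simp: majorant_def\<close>)
    thus ?thesis unfolding F_def gb_def using Tpos by (simp add: divide_right_mono)
  qed

  have gb_sc: "gb hs ((1-t) *\<^sub>R a + t *\<^sub>R b) \<le> (1-t) * gb hs a + t * gb hs b - rho/2 * t * (1-t) * (norm (a-b))\<^sup>2"
    if h: "set hs \<subseteq> {1..T}" "0 \<le> t" "t \<le> 1" for hs a b and t :: real
  proof -
    define c where "c = rho/2 * t * (1-t) * (norm (a-b))\<^sup>2"
    have "(\<Sum>u=1..T. g hs u ((1-t) *\<^sub>R a + t *\<^sub>R b)) \<le> (\<Sum>u=1..T. (1-t) * g hs u a + t * g hs u b - c)"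
      unfolding c_def by (rule sum_mono, rule sc_ineq) (use gprop[OF h(1)] h in auto)
    also have "\<dots> = (1-t) * (\<Sum>u=1..T. g hs u a) + t * (\<Sum>u=1..T. g hs u b) - real T * c"
      by (simp add: sum.distrib sum_subtractf sum_distrib_left)
    finally have "(1 / real T) * (\<Sum>u=1..T. g hs u ((1-t) *\<^sub>R a + t *\<^sub>R b))
       \<le> (1 / real T) * ((1-t) * (\<Sum>u=1..T. g hs u a) + t * (\<Sum>u=1..T. g hs u b) - real T * c)"
      using Tpos by (simp add: divide_right_mono)
    also have "\<dots> = (1-t) * gb hs a + t * gb hs b - c"
      unfolding gb_def using Tpos by (simp add: field_simps)
    finally show ?thesis unfolding c_def gb_def .
  qed

  have growth: "gb hs (theta hs) + rho/2 * dd hs \<le> gb hs theta_star"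
    if h: "set hs \<subseteq> {1..T}" "hs \<noteq> []" for hs
  proof -
    have "gb hs (theta hs) + rho/2 * (norm (theta hs - theta_star))\<^sup>2 \<le> gb hs theta_star"
    proof (rule sc_argmin_core[where G="gb hs"])
      fix t :: real assume t: "0 \<le> t" "t \<le> 1"
      show "gb hs ((1-t) *\<^sub>R theta hs + t *\<^sub>R theta_star) \<le> (1-t) * gb hs (theta hs) + t * gb hs theta_star
              - rho/2 * t * (1-t) * (norm (theta hs - theta_star))\<^sup>2"
        by (rule gb_sc[OF h(1) t])
      have "(1-t) *\<^sub>R theta hs + t *\<^sub>R theta_star \<in> Theta"
        using convexD[OF Theta_convex theta_in[OF h(1)] star_in, of "1-t" t] t by simp
      then show "gb hs (theta hs) \<le> gb hs ((1-t) *\<^sub>R theta hs + t *\<^sub>R theta_star)"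
        unfolding gb_def by (rule theta_argmin[OF h])
    qed
    thus ?thesis by (simp add: dd_def norm_minus_commute)
  qed

  have gbsnoc: "gb (hs@[s]) x = gb hs x + dl * (g (hs@[s]) s x - g hs s x)"
    if h: "set hs \<subseteq> {1..T}" and s: "s \<in> {1..T}" for hs s x
  proof -
    have "(\<Sum>t=1..T. g (hs@[s]) t x) = g (hs@[s]) s x + (\<Sum>t\<in>{1..T}-{s}. g (hs@[s]) t x)"
      by (rule sum.remove) (use s in auto)
    also have "(\<Sum>t\<in>{1..T}-{s}. g (hs@[s]) t x) = (\<Sum>t\<in>{1..T}-{s}. g hs t x)"
      by (rule sum.cong) (auto simp: gn_keep[OF h s])
    also have "(\<Sum>t\<in>{1..T}-{s}. g hs t x) = (\<Sum>t=1..T. g hs t x) - g hs s x"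
      using sum.remove[of "{1..T}" s "\<lambda>t. g hs t x"] s by simp
    finally have E: "(\<Sum>t=1..T. g (hs@[s]) t x) = g (hs@[s]) s x + ((\<Sum>t=1..T. g hs t x) - g hs s x)" .
    show ?thesis unfolding gb_def dl_def using Tpos by (simp only: E) (simp add: field_simps)
  qed

  have stepA: "(1/real T) * (\<Sum>s=1..T. A (hs@[s])) \<le> (1-dl) * A hs + dl * (L/2 * dd hs)"
    if h: "set hs \<subseteq> {1..T}" for hs
  proof -
    have sur: "g (hs@[s]) s theta_star \<le> f s theta_star + L/2 * dd hs" if s: "s \<in> {1..T}" for s
      using sur_facts(2)[OF conjunct1[OF gn_sur[OF h s]]] by (simp add: dd_def norm_minus_commute)
    define X where "X = (\<Sum>s=1..T. g (hs@[s]) s theta_star)"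
    have "(\<Sum>s=1..T. A (hs@[s])) = (\<Sum>s=1..T. (gb hs theta_star - fs) + (dl * g (hs@[s]) s theta_star - dl * g hs s theta_star))"
      by (rule sum.cong) (auto simp: A_def gbsnoc[OF h] algebra_simps)
    also have "\<dots> = real T * (gb hs theta_star - fs) + dl * X - dl * (\<Sum>s=1..T. g hs s theta_star)"
      unfolding X_def by (simp add: sum.distrib sum_subtractf sum_distrib_left)
    also have "(\<Sum>s=1..T. g hs s theta_star) = real T * gb hs theta_star" unfolding gb_def using Tpos by simp
    finally have eq: "(1/real T) * (\<Sum>s=1..T. A (hs@[s])) = (gb hs theta_star - fs) + dl * (X / real T) - dl * gb hs theta_star"
      using Tpos by (simp add: field_simps)
    have "X \<le> (\<Sum>s=1..T. f s theta_star + L/2 * dd hs)" unfolding X_def by (rule sum_mono, rule sur) simp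
    also have "\<dots> = real T * fs + real T * (L/2 * dd hs)"
      unfolding fs_def F_def using Tpos by (simp add: sum.distrib)
    finally have "X / real T \<le> fs + L/2 * dd hs" using Tpos by (simp add: field_simps)
    hence m: "dl * (X / real T) \<le> dl * (fs + L/2 * dd hs)" using dl_pos by (intro mult_left_mono) auto
    have r: "(1-dl) * A hs + dl * (L/2 * dd hs) = (gb hs theta_star - fs) + dl * (fs + L/2 * dd hs) - dl * gb hs theta_star"
      by (simp add: A_def algebra_simps)
    show ?thesis using eq m r by linarith
  qed

  have stepB: "B (hs@[s]) \<le> B hs" if h: "set hs \<subseteq> {1..T}" and s: "s \<in> {1..T}" for hs s
  proof -
    have h2: "set (hs@[s]) \<subseteq> {1..T}" using h s by auto
    have "gb (hs@[s]) (theta (hs@[s])) \<le> gb (hs@[s]) (theta hs)"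
      unfolding gb_def by (rule theta_argmin[OF h2 _ theta_in[OF h]]) simp
    also have "\<dots> = gb hs (theta hs) + dl * (g (hs@[s]) s (theta hs) - g hs s (theta hs))" by (rule gbsnoc[OF h s])
    finally have 1: "gb (hs@[s]) (theta (hs@[s])) \<le> gb hs (theta hs) + dl * (g (hs@[s]) s (theta hs) - g hs s (theta hs))" .
    have "g (hs@[s]) s (theta hs) = f s (theta hs)" using sur_facts(1)[OF conjunct1[OF gn_sur[OF h s]]] .
    moreover have "f s (theta hs) \<le> g hs s (theta hs)" using gprop[OF h s] by (simp add: majorant_def)
    ultimately have "dl * (g (hs@[s]) s (theta hs) - g hs s (theta hs)) \<le> 0"
      using dl_pos by (simp add: mult_nonneg_nonpos)
    with 1 show ?thesis unfolding B_def by linarith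
  qed

  have A0: "A [] \<le> L/2 * dd []"
  proof -
    have "(\<Sum>t=1..T. g [] t theta_star) \<le> (\<Sum>t=1..T. f t theta_star + L/2 * dd [])"
      by (rule sum_mono) (use sur_facts(2)[OF conjunct1[OF g0_sur]] in \<open>simp add: dd_def norm_minus_commute\<close>)
    also have "\<dots> = real T * fs + real T * (L/2 * dd [])"
      unfolding fs_def F_def using Tpos by (simp add: sum.distrib)
    finally show ?thesis unfolding A_def gb_def using Tpos by (simp add: field_simps)
  qed

  have e_le_B: "e hs \<le> B hs" if "set hs \<subseteq> {1..T}" for hs
    using F_le_gb[OF that] by (simp add: e_def B_def)
  have B_le_A: "B hs + rho/2 * dd hs \<le> A hs" if "set hs \<subseteq> {1..T}" "hs \<noteq> []" for hs
    using growth[OF that] by (simp add: A_def B_def)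
  have e0: "0 \<le> e hs" if "set hs \<subseteq> {1..T}" for hs
    using star_min[OF theta_in[OF that]] by (simp add: e_def fs_def)

  define EE where "EE n X = (\<Sum>hs\<in>histories T n. X hs) / real T ^ n" for n and X :: "nat list \<Rightarrow> real"
  have Eeq: "measure_pmf.expectation (pmf_of_set (histories T n)) X = EE n X" for n X
    using integral_pmf_of_set[OF hist_ne[OF T_pos, of n] hist_fin[of T n], of X] hist_card[of T n]
    by (simp add: EE_def)
  have EE_Suc: "EE (Suc n) X = EE n (\<lambda>hs. (1/real T) * (\<Sum>s=1..T. X (hs@[s])))" for n X
    unfolding EE_def hist_sum using Tpos by (simp add: sum_distrib_left[symmetric] sum_divide_distrib[symmetric] field_simps)
  have EE_0: "EE 0 X = X []" for X unfolding EE_def hist_0 by simp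
  have EE_mono: "EE n X \<le> EE n Y" if "\<And>hs. hs \<in> histories T n \<Longrightarrow> X hs \<le> Y hs" for n X Y
    unfolding EE_def using that Tpos by (simp add: divide_right_mono sum_mono)
  have EE_lin: "EE n (\<lambda>hs. a * X hs + b * Y hs) = a * EE n X + b * EE n Y" for n a b X Y
    unfolding EE_def by (simp add: sum.distrib sum_distrib_left add_divide_distrib)
  have EE_scale: "EE n (\<lambda>hs. a * X hs) = a * EE n X" for n a X
    unfolding EE_def by (simp add: sum_distrib_left)
  have hin: "set hs \<subseteq> {1..T}" if "hs \<in> histories T n" for hs n using that by (simp add: histories_def)
  have hne: "hs \<noteq> []" if "hs \<in> histories T n" "n \<ge> 1" for hs n using that by (auto simp: histories_def)

  define D0 where "D0 = dd []"
  have a1: "EE 1 A \<le> L/2 * D0"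
  proof -
    have "EE 1 A = (1/real T) * (\<Sum>s=1..T. A ([]@[s]))" using EE_Suc[of 0 A] EE_0 by simp
    also have "\<dots> \<le> (1-dl) * A [] + dl * (L/2 * dd [])" by (rule stepA) simp
    also have "\<dots> \<le> (1-dl) * (L/2 * dd []) + dl * (L/2 * dd [])"
      using mult_left_mono[OF A0, of "1-dl"] dl_le by simp
    also have "\<dots> = L/2 * D0" unfolding D0_def by (rule aux_comb)
    finally show ?thesis .
  qed
  have e_le: "EE n e \<le> EE n B" "EE n B \<le> EE n A" "0 \<le> EE n e" if "n \<ge> 1" for n
  proof -
    show "EE n e \<le> EE n B" by (rule EE_mono) (use e_le_B hin in blast)
    show "EE n B \<le> EE n A" 
    proof (rule EE_mono)
      fix hs assume hh: "hs \<in> histories T n"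
      have "B hs + rho/2 * dd hs \<le> A hs" using B_le_A[OF hin[OF hh] hne[OF hh that]] .
      moreover have "0 \<le> rho/2 * dd hs" using rho0 dd0[of hs] by simp
      ultimately show "B hs \<le> A hs" by linarith
    qed
    have "EE n (\<lambda>_. 0) \<le> EE n e" by (rule EE_mono) (use e0 hin in blast)
    thus "0 \<le> EE n e" by (simp add: EE_def)
  qed

  have part1: "\<forall>n\<ge>1. measure_pmf.expectation (pmf_of_set (histories T n)) (\<lambda>hs. F (theta hs) - F theta_star)
            \<le> L * (norm (theta_star - theta []))\<^sup>2 / (2 * (1 / real T) * real n)"
  proof (intro allI impI)
    fix n :: nat assume n1: "n \<ge> 1"
    have RA: "EE (Suc m) A \<le> EE m A - dl * EE m B" if m1: "m \<ge> 1" for m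
    proof -
      have "EE (Suc m) A \<le> EE m (\<lambda>hs. 1 * A hs + (- dl) * B hs)"
        unfolding EE_Suc
      proof (rule EE_mono)
        fix hs assume hh: "hs \<in> histories T m"
        have "L/2 * dd hs \<le> rho/2 * dd hs" using rho_ge dd0[of hs] by (simp add: mult_right_mono)
        also have "\<dots> \<le> A hs - B hs" using B_le_A[OF hin[OF hh] hne[OF hh m1]] by simp
        finally have "dl * (L/2 * dd hs) \<le> dl * (A hs - B hs)" using dl_pos by (intro mult_left_mono) auto
        with stepA[OF hin[OF hh]] show "(1/real T) * (\<Sum>s=1..T. A (hs@[s])) \<le> 1 * A hs + (- dl) * B hs"
          by (simp add: algebra_simps)
      qed
      thus ?thesis unfolding EE_lin by simp
    qed
    have RB: "EE (Suc m) B \<le> EE m B" for m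
      unfolding EE_Suc
    proof (rule EE_mono)
      fix hs assume hh: "hs \<in> histories T m"
      have "(\<Sum>s=1..T. B (hs@[s])) \<le> (\<Sum>s=1..T. B hs)" by (rule sum_mono) (simp add: stepB[OF hin[OF hh]])
      thus "(1/real T) * (\<Sum>s=1..T. B (hs@[s])) \<le> B hs" using Tpos by (simp add: field_simps)
    qed
    have R4: "EE m A + dl * (real m - 1) * EE m B \<le> L/2 * D0" if "m \<ge> 1" for m
      using that
    proof (induction m rule: nat_induct_at_least)
      case base thus ?case using a1 by simp
    next
      case (Suc m)
      have "dl * real m * EE (Suc m) B \<le> dl * real m * EE m B"
        using RB[of m] dl_pos by (intro mult_left_mono) auto
      with RA[OF Suc.hyps] Suc.IH show ?case by (simp add: algebra_simps)
    qed
    define c where "c = EE n e"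
    have c0: "0 \<le> c" and cB: "c \<le> EE n B" and BA: "EE n B \<le> EE n A" using e_le[OF n1] by (auto simp: c_def)
    have "c * (dl * real n) \<le> c * (1 + dl * (real n - 1))"
      using c0 dl_le by (intro mult_left_mono) (auto simp: algebra_simps)
    also have "\<dots> \<le> EE n B * (1 + dl * (real n - 1))"
      using cB n1 dl_pos by (intro mult_right_mono) auto
    also have "\<dots> \<le> L/2 * D0" using R4[OF n1] BA by (simp add: algebra_simps)
    finally have "c * (dl * real n) \<le> L/2 * D0" .
    moreover have "dl * real n > 0" using dl_pos n1 by simp
    ultimately have "c \<le> L/2 * D0 / (dl * real n)" by (simp add: pos_le_divide_eq)
    thus "measure_pmf.expectation (pmf_of_set (histories T n)) (\<lambda>hs. F (theta hs) - F theta_star)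
            \<le> L * (norm (theta_star - theta []))\<^sup>2 / (2 * (1 / real T) * real n)"
      unfolding Eeq c_def e_def fs_def D0_def dd_def dl_def by (simp add: field_simps)
  qed
  have part2: "\<forall>mu>0. strongly_convex_on UNIV mu F \<longrightarrow>
            (\<forall>n\<ge>1.
               measure_pmf.expectation (pmf_of_set (histories T n))
                 (\<lambda>hs. (norm (theta_star - theta hs))\<^sup>2)
               \<le> ((1 - 1 / real T) + (1 / real T) * (L / (rho + mu))) ^ n
                   * (norm (theta_star - theta []))\<^sup>2
             \<and> measure_pmf.expectation (pmf_of_set (histories T n))
                 (\<lambda>hs. F (theta hs) - F theta_star)
               \<le> ((1 - 1 / real T) + (1 / real T) * (L / (rho + mu))) ^ (n - 1)
                   * (L * (norm (theta_star - theta []))\<^sup>2 / 2))"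
  proof (intro allI impI)
    fix mu :: real and n :: nat assume mu0: "mu > 0" and scF: "strongly_convex_on UNIV mu F" and n1: "n \<ge> 1"
    define beta where "beta = (1 - dl) + dl * (L / (rho + mu))"
    have rm: "rho + mu > 0" using rho0 mu0 by linarith
    have q0: "0 \<le> L / (rho + mu)" using L0 rm by simp
    have q1: "L / (rho + mu) \<le> 1" using rho_ge mu0 rm by (simp add: divide_le_eq_1)
    have beta0: "0 \<le> beta" unfolding beta_def using dl_le mult_nonneg_nonneg[OF less_imp_le[OF dl_pos] q0] by linarith
    have qb: "L / (rho + mu) \<le> beta"
    proof -
      have "beta - L / (rho + mu) = (1 - dl) * (1 - L / (rho + mu))" unfolding beta_def by (rule aux_beta)
      moreover have "0 \<le> (1 - dl) * (1 - L / (rho + mu))" using dl_le q1 by simp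
      ultimately show ?thesis by linarith
    qed
    have egrow: "mu/2 * dd hs \<le> e hs" if h: "set hs \<subseteq> {1..T}" for hs
    proof -
      have "F theta_star + mu/2 * (norm (theta_star - theta hs))\<^sup>2 \<le> F (theta hs)"
      proof (rule sc_argmin_core[where G=F])
        fix t :: real assume t: "0 \<le> t" "t \<le> 1"
        show "F ((1-t) *\<^sub>R theta_star + t *\<^sub>R theta hs) \<le> (1-t) * F theta_star + t * F (theta hs)
              - mu/2 * t * (1-t) * (norm (theta_star - theta hs))\<^sup>2"
          by (rule sc_ineq[OF scF t])
        have "(1-t) *\<^sub>R theta_star + t *\<^sub>R theta hs \<in> Theta"
          using convexD[OF Theta_convex star_in theta_in[OF h], of "1-t" t] t by simp
        then show "F theta_star \<le> F ((1-t) *\<^sub>R theta_star + t *\<^sub>R theta hs)" by (rule star_min)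
      qed
      thus ?thesis by (simp add: e_def fs_def dd_def)
    qed
    have Agrow: "(rho + mu)/2 * dd hs \<le> A hs" if "set hs \<subseteq> {1..T}" "hs \<noteq> []" for hs
      using B_le_A[OF that] egrow[OF that(1)] e_le_B[OF that(1)] by (simp add: algebra_simps)
    have S1: "EE (Suc m) A \<le> beta * EE m A" if m1: "m \<ge> 1" for m
    proof -
      have "EE (Suc m) A \<le> EE m (\<lambda>hs. beta * A hs)"
        unfolding EE_Suc
      proof (rule EE_mono)
        fix hs assume hh: "hs \<in> histories T m"
        have "L/2 * dd hs = (L / (rho + mu)) * ((rho + mu)/2 * dd hs)" using rm by (simp add: field_simps)
        also have "\<dots> \<le> (L / (rho + mu)) * A hs"
          using Agrow[OF hin[OF hh] hne[OF hh m1]] q0 by (intro mult_left_mono) auto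
        finally have "dl * (L/2 * dd hs) \<le> dl * ((L / (rho + mu)) * A hs)" using dl_pos by (intro mult_left_mono) auto
        moreover have "(1-dl) * A hs + dl * ((L / (rho + mu)) * A hs) = beta * A hs"
          unfolding beta_def by (rule aux_beta2)
        ultimately show "(1/real T) * (\<Sum>s=1..T. A (hs@[s])) \<le> beta * A hs"
          using stepA[OF hin[OF hh]] by linarith
      qed
      thus ?thesis unfolding EE_scale .
    qed
    have S2: "EE m A \<le> beta ^ (m - 1) * (L/2 * D0)" if "m \<ge> 1" for m
      using that
    proof (induction m rule: nat_induct_at_least)
      case base thus ?case using a1 by simp
    next
      case (Suc m)
      have "EE (Suc m) A \<le> beta * EE m A" by (rule S1[OF Suc.hyps])
      also have "\<dots> \<le> beta * (beta ^ (m - 1) * (L/2 * D0))" using Suc.IH beta0 by (intro mult_left_mono) auto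
      also have "\<dots> = beta ^ (Suc m - 1) * (L/2 * D0)" using Suc.hyps by (cases m) auto
      finally show ?case .
    qed
    have D00: "0 \<le> D0" by (simp add: D0_def dd0)
    have ddE: "EE n dd \<le> (2 / (rho + mu)) * EE n A"
    proof -
      have "EE n dd \<le> EE n (\<lambda>hs. (2 / (rho + mu)) * A hs)"
      proof (rule EE_mono)
        fix hs assume hh: "hs \<in> histories T n"
        from Agrow[OF hin[OF hh] hne[OF hh n1]] rm show "dd hs \<le> 2 / (rho + mu) * A hs"
          by (simp add: field_simps)
      qed
      thus ?thesis unfolding EE_scale .
    qed
    also have "\<dots> \<le> (2 / (rho + mu)) * (beta ^ (n - 1) * (L/2 * D0))"
      using S2[OF n1] rm by (intro mult_left_mono) auto
    also have "\<dots> = beta ^ (n - 1) * (L / (rho + mu)) * D0" using rm by (simp add: field_simps)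
    also have "\<dots> \<le> beta ^ (n - 1) * beta * D0"
      using qb beta0 D00 by (intro mult_right_mono mult_left_mono) auto
    also have "\<dots> = beta ^ n * D0" using n1 by (cases n) auto
    finally have X1: "EE n dd \<le> beta ^ n * D0" .
    have X2: "EE n e \<le> beta ^ (n - 1) * (L/2 * D0)" using e_le[OF n1] S2[OF n1] by linarith
    show "measure_pmf.expectation (pmf_of_set (histories T n)) (\<lambda>hs. (norm (theta_star - theta hs))\<^sup>2)
               \<le> ((1 - 1 / real T) + (1 / real T) * (L / (rho + mu))) ^ n * (norm (theta_star - theta []))\<^sup>2
             \<and> measure_pmf.expectation (pmf_of_set (histories T n)) (\<lambda>hs. F (theta hs) - F theta_star)
               \<le> ((1 - 1 / real T) + (1 / real T) * (L / (rho + mu))) ^ (n - 1) * (L * (norm (theta_star - theta []))\<^sup>2 / 2)"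
      using X1 X2 unfolding Eeq beta_def dl_def D0_def
      by (simp add: dd_def[abs_def] e_def[abs_def] fs_def)
  qed
  show ?thesis using part1 part2 by blast
qed

end
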